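(* Let $p\in(0,1)$, $\gamma>0$, $B>0$, $w,N\in\mathbb{N}$, and let $(\xi_j^{(N)*})_{j=1}^N$ be the unique maximizer of $\mathcal{T}_N$. Then for every $j\in\{1,\dots,N-1\}$, $$\xi_j^{(N)*}<\frac{B-\sum_{i=1}^{j}\xi_i^{(N)*}}{w}.$$
   Context: Logarithms are base 2. For an admissible (nonnegative, with sum at most $B$) sequence $(x_j)_{j\ge1}$, $$\mathcal{T}_\infty(x_1,x_2,\dots)=\sum_{k=1}^{w}p^2(1-p)^{k-1}\frac{k}{2}\log_2\!\Big(1+\gamma\frac{B}{k}\Big)+\sum_{j=1}^{\infty}p(1-p)^{j+w-1}\frac12\log_2(1+\gamma x_j)+\sum_{k=1}^{\infty}p^2(1-p)^{k+w-1}\frac{w}{2}\log_2\!\Big(1+\gamma\frac{B-\sum_{j=1}^{k}x_j}{w}\Big).$$ For $N\in\mathbb{N}$ and $\xi_1,\dots,\xi_N\ge0$ with $\sum_{j=1}^N\xi_j\le B$, define $\mathcal{T}_N(\xi_1,\dots,\xi_N)=\mathcal{T}_\infty(\xi_1,\dots,\xi_N,0,0,\dots)$. $\mathcal{T}_N$ has a unique maximizer over this compact set, denoted $(\xi_j^{(N)*})_{j=1}^N$. *)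

theory Defs
  imports "HOL-Analysis.Analysis"
begin

text \<open>Sequences are functions nat => real indexed from 1 (value at 0 is ignored).\<close>

definition T_inf :: "real \<Rightarrow> real \<Rightarrow> real \<Rightarrow> nat \<Rightarrow> (nat \<Rightarrow> real) \<Rightarrow> real" where
  "T_inf p \<gamma> B w x =
     (\<Sum>k=1..w. p^2 * (1-p)^(k-1) * (real k / 2) * log 2 (1 + \<gamma> * (B / real k)))
   + (\<Sum>j. p * (1-p)^(Suc j + w - 1) * (1/2) * log 2 (1 + \<gamma> * x (Suc j)))
   + (\<Sum>k. p^2 * (1-p)^(Suc k + w - 1) * (real w / 2)
          * log 2 (1 + \<gamma> * ((B - (\<Sum>i=1..Suc k. x i)) / real w)))"

definition T_N :: "real \<Rightarrow> real \<Rightarrow> real \<Rightarrow> nat \<Rightarrow> nat \<Rightarrow> (nat \<Rightarrow> real) \<Rightarrow> real" where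
  "T_N p \<gamma> B w N \<xi> = T_inf p \<gamma> B w (\<lambda>j. if j \<in> {1..N} then \<xi> j else 0)"

definition admissible_N :: "real \<Rightarrow> nat \<Rightarrow> (nat \<Rightarrow> real) \<Rightarrow> bool" where
  "admissible_N B N \<xi> \<longleftrightarrow> (\<forall>j\<in>{1..N}. 0 \<le> \<xi> j) \<and> (\<Sum>j=1..N. \<xi> j) \<le> B"

end

theory Submission
  imports Defs
begin

definition Fv :: "real \<Rightarrow> real \<Rightarrow> real \<Rightarrow> nat \<Rightarrow> nat \<Rightarrow> (nat \<Rightarrow> real) \<Rightarrow> real" where
 "Fv p \<gamma> B w N x =
   (\<Sum>k=1..w. p^2 * (1-p)^(k-1) * (real k / 2) * log 2 (1 + \<gamma> * (B / real k)))
 + (\<Sum>j=1..N. p * (1-p)^(j + w - 1) * (1/2) * log 2 (1 + \<gamma> * x j))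
 + (\<Sum>k=1..N-1. p^2 * (1-p)^(k + w - 1) * (real w / 2) * log 2 (1 + \<gamma> * ((B - (\<Sum>i=1..k. x i)) / real w)))
 + p * (1-p)^(N + w - 1) * (real w / 2) * log 2 (1 + \<gamma> * ((B - (\<Sum>i=1..N. x i)) / real w))"

lemma sum_restr_ge:
  fixes n N :: nat
  assumes "N \<le> n"
  shows "(\<Sum>i=1..n. (if i \<in> {1..N} then x i else (0::real))) = (\<Sum>i=1..N. x i)"
proof -
  have "(\<Sum>i=1..n. (if i \<in> {1..N} then x i else (0::real))) = (\<Sum>i\<in>{1..n} \<inter> {1..N}. x i)"
    by (rule sum.inter_restrict[symmetric]) simp
  also have "{1..n} \<inter> {1..N} = {1..N}" using assms by auto
  finally show ?thesis .
qed

lemma sum_restr_le: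
  fixes n N :: nat
  assumes "n \<le> N"
  shows "(\<Sum>i=1..n. (if i \<in> {1..N} then x i else (0::real))) = (\<Sum>i=1..n. x i)"
  using assms by (intro sum.cong) auto

lemma TN_eq:
  assumes p: "0 < p" "p < 1" and N: "1 \<le> N"
  shows "T_N p \<gamma> B w N x = Fv p \<gamma> B w N x"
proof -
  define x' where "x' = (\<lambda>j. if j \<in> {1..N} then x j else 0)"
  define f where "f = (\<lambda>j. p * (1-p)^(Suc j + w - 1) * (1/2) * log 2 (1 + \<gamma> * x' (Suc j)))"
  have f0: "f j = 0" if "j \<notin> {..<N}" for j using that by (simp add: f_def x'_def)
  have s2: "(\<Sum>j. f j) = (\<Sum>j=1..N. p * (1-p)^(j + w - 1) * (1/2) * log 2 (1 + \<gamma> * x j))"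
  proof -
    have "(\<Sum>j. f j) = (\<Sum>j<N. f j)" by (rule suminf_finite) (auto simp: f0)
    also have "\<dots> = (\<Sum>j=1..N. p * (1-p)^(j + w - 1) * (1/2) * log 2 (1 + \<gamma> * x j))"
      by (simp add: sum.atLeast1_atMost_eq f_def x'_def)
    finally show ?thesis .
  qed
  define g where "g = (\<lambda>k. p^2 * (1-p)^(Suc k + w - 1) * (real w / 2)
          * log 2 (1 + \<gamma> * ((B - (\<Sum>i=1..Suc k. x' i)) / real w)))"
  define LN where "LN = log 2 (1 + \<gamma> * ((B - (\<Sum>i=1..N. x i)) / real w))"
  have gt: "g (k + (N-1)) = (p^2 * (1-p)^(N + w - 1) * (real w / 2) * LN) * (1-p)^k" for k
  proof -
    have "(\<Sum>i=1..Suc (k + (N-1)). x' i) = (\<Sum>i=1..N. x i)"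
      unfolding x'_def by (rule sum_restr_ge) (use N in auto)
    moreover have "Suc (k + (N - 1)) + w - 1 = (N + w - 1) + k" using N by auto
    hence e: "(1-p)^(Suc (k + (N - 1)) + w - 1) = (1-p)^(N + w - 1) * (1-p)^k"
      by (simp only: power_add)
    ultimately show ?thesis unfolding g_def LN_def e by simp
  qed
  have "(\<lambda>k. (1-p)^k) sums (1 / (1 - (1-p)))" by (rule geometric_sums) (use p in auto)
  hence "(\<lambda>k. g (k + (N-1))) sums ((p^2 * (1-p)^(N + w - 1) * (real w / 2) * LN) * (1 / (1 - (1-p))))"
    unfolding gt by (rule sums_mult)
  hence "(\<lambda>k. g (k + (N-1))) sums (p * (1-p)^(N + w - 1) * (real w / 2) * LN)"
    using p by (simp add: power2_eq_square mult.assoc)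
  hence "g sums (p * (1-p)^(N + w - 1) * (real w / 2) * LN + (\<Sum>k<N-1. g k))"
    by (simp add: sums_iff_shift)
  hence s3: "(\<Sum>k. g k) = (\<Sum>k=1..N-1. p^2 * (1-p)^(k + w - 1) * (real w / 2) * log 2 (1 + \<gamma> * ((B - (\<Sum>i=1..k. x i)) / real w)))
     + p * (1-p)^(N + w - 1) * (real w / 2) * LN"
  proof -
    assume h: "g sums (p * (1-p)^(N + w - 1) * (real w / 2) * LN + (\<Sum>k<N-1. g k))"
    define G where "G = (\<lambda>k. p^2 * (1-p)^(k + w - 1) * (real w / 2) * log 2 (1 + \<gamma> * ((B - (\<Sum>i=1..k. x i)) / real w)))"
    have "(\<Sum>k<N-1. g k) = (\<Sum>k<N-1. G (Suc k))"
    proof (intro sum.cong refl)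
      fix k assume "k \<in> {..<N-1}"
      hence "(\<Sum>i=1..Suc k. x' i) = (\<Sum>i=1..Suc k. x i)" unfolding x'_def by (intro sum_restr_le) auto
      thus "g k = G (Suc k)" by (simp add: g_def G_def)
    qed
    also have "\<dots> = sum G {1..N-1}" by (simp only: sum.atLeast1_atMost_eq One_nat_def)
    finally have "(\<Sum>k<N-1. g k) = (\<Sum>k=1..N-1. p^2 * (1-p)^(k + w - 1) * (real w / 2) * log 2 (1 + \<gamma> * ((B - (\<Sum>i=1..k. x i)) / real w)))"
      unfolding G_def .
    with h show ?thesis by (simp add: sums_unique[symmetric])
  qed
  show ?thesis
    unfolding T_N_def T_inf_def Fv_def
    using s2 s3 unfolding f_def g_def x'_def LN_def by simp
qed

lemma dlog:
  fixes a b c \<gamma> :: real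
  assumes "0 < 1 + \<gamma> * a"
  shows "((\<lambda>e. c * log 2 (1 + \<gamma> * (a + e * b))) has_real_derivative c * \<gamma> * b / (ln 2 * (1 + \<gamma> * a))) (at 0)"
proof -
  have "((\<lambda>e. log 2 (1 + \<gamma> * (a + e * b))) has_real_derivative 1 / (ln 2 * (1 + \<gamma> * (a + 0 * b))) * (\<gamma> * b)) (at 0)"
    by (rule DERIV_chain2[OF DERIV_log]) (use assms in \<open>auto intro!: derivative_eq_intros\<close>)
  from DERIV_cmult[OF this, of c] show ?thesis by (simp add: mult.assoc)
qed

lemma Fv_deriv:
  fixes \<xi> d :: "nat \<Rightarrow> real"
  assumes w: "1 \<le> w" and N: "1 \<le> N" and pos1: "\<And>j. j \<in> {1..N} \<Longrightarrow> 0 < 1 + \<gamma> * \<xi> j"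
    and pos2: "\<And>k. k \<in> {1..N} \<Longrightarrow> 0 < 1 + \<gamma> * ((B - (\<Sum>i=1..k. \<xi> i)) / real w)"
  shows "((\<lambda>e. Fv p \<gamma> B w N (\<lambda>i. \<xi> i + e * d i)) has_real_derivative
     ((\<Sum>j=1..N. p*(1-p)^(j+w-1)/2 * \<gamma> * d j / (ln 2 * (1 + \<gamma> * \<xi> j)))
    - (\<Sum>k=1..N-1. p^2*(1-p)^(k+w-1)/2 * \<gamma> * (\<Sum>i=1..k. d i) / (ln 2 * (1 + \<gamma> * ((B - (\<Sum>i=1..k. \<xi> i)) / real w))))
    - p*(1-p)^(N+w-1)/2 * \<gamma> * (\<Sum>i=1..N. d i) / (ln 2 * (1 + \<gamma> * ((B - (\<Sum>i=1..N. \<xi> i)) / real w))))) (at 0)"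
proof -
  define S where "S k = (\<Sum>i=1..k. \<xi> i)" for k
  define D where "D k = (\<Sum>i=1..k. d i)" for k
  have wp: "real w > 0" using w by auto
  have ss: "(B - (\<Sum>i=1..k. \<xi> i + e * d i)) / real w = (B - S k) / real w + e * (- D k / real w)" for k e
    using wp by (simp add: sum.distrib sum_distrib_left S_def D_def field_simps)
  define C where "C = (\<Sum>k=1..w. p^2 * (1-p)^(k-1) * (real k / 2) * log 2 (1 + \<gamma> * (B / real k)))"
  have F: "(\<lambda>e. Fv p \<gamma> B w N (\<lambda>i. \<xi> i + e * d i)) = (\<lambda>e. C
     + (\<Sum>j=1..N. (p * (1-p)^(j + w - 1) * (1/2)) * log 2 (1 + \<gamma> * (\<xi> j + e * d j)))
     + (\<Sum>k=1..N-1. (p^2 * (1-p)^(k + w - 1) * (real w / 2)) * log 2 (1 + \<gamma> * ((B - S k) / real w + e * (- D k / real w))))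
     + (p * (1-p)^(N + w - 1) * (real w / 2)) * log 2 (1 + \<gamma> * ((B - S N) / real w + e * (- D N / real w))))"
    unfolding Fv_def ss C_def ..
  have d1: "((\<lambda>e. \<Sum>j=1..N. (p * (1-p)^(j + w - 1) * (1/2)) * log 2 (1 + \<gamma> * (\<xi> j + e * d j)))
     has_real_derivative (\<Sum>j=1..N. (p * (1-p)^(j + w - 1) * (1/2)) * \<gamma> * d j / (ln 2 * (1 + \<gamma> * \<xi> j)))) (at 0)"
    by (rule DERIV_sum) (rule dlog, rule pos1)
  have d2: "((\<lambda>e. \<Sum>k=1..N-1. (p^2 * (1-p)^(k + w - 1) * (real w / 2)) * log 2 (1 + \<gamma> * ((B - S k) / real w + e * (- D k / real w))))
     has_real_derivative (\<Sum>k=1..N-1. (p^2 * (1-p)^(k + w - 1) * (real w / 2)) * \<gamma> * (- D k / real w) / (ln 2 * (1 + \<gamma> * ((B - S k) / real w))))) (at 0)"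
    by (rule DERIV_sum) (rule dlog, use pos2 in \<open>auto simp: S_def\<close>)
  have d3: "((\<lambda>e. (p * (1-p)^(N + w - 1) * (real w / 2)) * log 2 (1 + \<gamma> * ((B - S N) / real w + e * (- D N / real w))))
     has_real_derivative ((p * (1-p)^(N + w - 1) * (real w / 2)) * \<gamma> * (- D N / real w) / (ln 2 * (1 + \<gamma> * ((B - S N) / real w))))) (at 0)"
    by (rule dlog) (use pos2 N in \<open>auto simp: S_def\<close>)
  have all: "((\<lambda>e. Fv p \<gamma> B w N (\<lambda>i. \<xi> i + e * d i)) has_real_derivative
     0 + (\<Sum>j=1..N. (p * (1-p)^(j + w - 1) * (1/2)) * \<gamma> * d j / (ln 2 * (1 + \<gamma> * \<xi> j)))
     + (\<Sum>k=1..N-1. (p^2 * (1-p)^(k + w - 1) * (real w / 2)) * \<gamma> * (- D k / real w) / (ln 2 * (1 + \<gamma> * ((B - S k) / real w))))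
     + ((p * (1-p)^(N + w - 1) * (real w / 2)) * \<gamma> * (- D N / real w) / (ln 2 * (1 + \<gamma> * ((B - S N) / real w))))) (at 0)"
    unfolding F by (intro DERIV_add DERIV_const d1 d2 d3)
  have e1: "(\<Sum>j=1..N. (p * (1-p)^(j + w - 1) * (1/2)) * \<gamma> * d j / (ln 2 * (1 + \<gamma> * \<xi> j)))
     = (\<Sum>j=1..N. p*(1-p)^(j+w-1)/2 * \<gamma> * d j / (ln 2 * (1 + \<gamma> * \<xi> j)))"
    by (intro sum.cong refl) simp
  have e2: "(\<Sum>k=1..N-1. (p^2 * (1-p)^(k + w - 1) * (real w / 2)) * \<gamma> * (- D k / real w) / (ln 2 * (1 + \<gamma> * ((B - S k) / real w))))
     = - (\<Sum>k=1..N-1. p^2*(1-p)^(k+w-1)/2 * \<gamma> * (\<Sum>i=1..k. d i) / (ln 2 * (1 + \<gamma> * ((B - (\<Sum>i=1..k. \<xi> i)) / real w))))"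
    unfolding sum_negf[symmetric] by (intro sum.cong refl) (use wp in \<open>simp add: S_def D_def\<close>)
  have e3: "((p * (1-p)^(N + w - 1) * (real w / 2)) * \<gamma> * (- D N / real w) / (ln 2 * (1 + \<gamma> * ((B - S N) / real w))))
     = - (p*(1-p)^(N+w-1)/2 * \<gamma> * (\<Sum>i=1..N. d i) / (ln 2 * (1 + \<gamma> * ((B - (\<Sum>i=1..N. \<xi> i)) / real w))))"
    using wp by (simp add: S_def D_def)
  show ?thesis using all unfolding e1 e2 e3 by simp
qed

definition Dv :: "real \<Rightarrow> real \<Rightarrow> real \<Rightarrow> nat \<Rightarrow> nat \<Rightarrow> (nat \<Rightarrow> real) \<Rightarrow> (nat \<Rightarrow> real) \<Rightarrow> real" where
  "Dv p \<gamma> B w N \<xi> d =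
     ((\<Sum>j=1..N. p*(1-p)^(j+w-1)/2 * \<gamma> * d j / (ln 2 * (1 + \<gamma> * \<xi> j)))
    - (\<Sum>k=1..N-1. p^2*(1-p)^(k+w-1)/2 * \<gamma> * (\<Sum>i=1..k. d i) / (ln 2 * (1 + \<gamma> * ((B - (\<Sum>i=1..k. \<xi> i)) / real w))))
    - p*(1-p)^(N+w-1)/2 * \<gamma> * (\<Sum>i=1..N. d i) / (ln 2 * (1 + \<gamma> * ((B - (\<Sum>i=1..N. \<xi> i)) / real w))))"

lemma perturb:
  fixes \<xi> d :: "nat \<Rightarrow> real"
  assumes p: "0 < p" "p < 1" and w: "1 \<le> w" and N: "1 \<le> N"
    and pos1: "\<And>j. j \<in> {1..N} \<Longrightarrow> 0 < 1 + \<gamma> * \<xi> j"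
    and pos2: "\<And>k. k \<in> {1..N} \<Longrightarrow> 0 < 1 + \<gamma> * ((B - (\<Sum>i=1..k. \<xi> i)) / real w)"
    and opt: "\<forall>\<eta>. admissible_N B N \<eta> \<longrightarrow> T_N p \<gamma> B w N \<eta> \<le> T_N p \<gamma> B w N \<xi>"
    and \<delta>: "0 < \<delta>" and adm: "\<And>e. 0 < e \<Longrightarrow> e \<le> \<delta> \<Longrightarrow> admissible_N B N (\<lambda>i. \<xi> i + e * d i)"
    and Dpos: "0 < Dv p \<gamma> B w N \<xi> d"
  shows False
proof -
  have der: "((\<lambda>e. Fv p \<gamma> B w N (\<lambda>i. \<xi> i + e * d i)) has_real_derivative Dv p \<gamma> B w N \<xi> d) (at 0)"
    unfolding Dv_def by (rule Fv_deriv[OF w N pos1 pos2])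
  obtain d0 where d0: "d0 > 0" and inc: "\<And>h. h > 0 \<Longrightarrow> h < d0 \<Longrightarrow>
      Fv p \<gamma> B w N (\<lambda>i. \<xi> i + 0 * d i) < Fv p \<gamma> B w N (\<lambda>i. \<xi> i + (0 + h) * d i)"
    using DERIV_pos_inc_right[OF der Dpos] by blast
  define h where "h = min (d0/2) \<delta>"
  have h: "h > 0" "h < d0" "h \<le> \<delta>" using d0 \<delta> by (auto simp: h_def)
  have "Fv p \<gamma> B w N \<xi> < Fv p \<gamma> B w N (\<lambda>i. \<xi> i + h * d i)"
    using inc[OF h(1,2)] by simp
  also have "\<dots> = T_N p \<gamma> B w N (\<lambda>i. \<xi> i + h * d i)" by (rule TN_eq[symmetric, OF p N])
  also have "\<dots> \<le> T_N p \<gamma> B w N \<xi>" using opt adm[OF h(1,3)] by blast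
  also have "\<dots> = Fv p \<gamma> B w N \<xi>" by (rule TN_eq[OF p N])
  finally show False by simp
qed

lemma geom_id:
  fixes q :: real
  assumes "j \<le> N"
  shows "(\<Sum>k\<in>{j..<N}. (1-q) * q^(k+m)) = q^(j+m) - q^(N+m)"
  using assms
proof (induction N)
  case 0 then show ?case by simp
next
  case (Suc N)
  show ?case
  proof (cases "j = Suc N")
    case True then show ?thesis by simp
  next
    case False
    hence "j \<le> N" using Suc.prems by simp
    hence "{j..<Suc N} = insert N {j..<N}" by auto
    then show ?thesis using Suc.IH[OF \<open>j \<le> N\<close>] by (simp add: algebra_simps)
  qed
qed

lemma sum_le_mono:
  fixes \<xi> :: "nat \<Rightarrow> real"
  assumes "\<forall>i\<in>{1..N}. 0 \<le> \<xi> i" "k \<le> k'" "k' \<le> N"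
  shows "(\<Sum>i=1..k. \<xi> i) \<le> (\<Sum>i=1..k'. \<xi> i)"
  by (rule sum_mono2) (use assms in auto)

lemma sum_lt_mono:
  fixes \<xi> :: "nat \<Rightarrow> real"
  assumes "\<forall>i\<in>{1..N}. 0 \<le> \<xi> i" "k < k0" "k0 \<le> k'" "k' \<le> N"
  shows "(\<Sum>i=1..k. \<xi> i) + \<xi> k0 \<le> (\<Sum>i=1..k'. \<xi> i)"
proof -
  have "(\<Sum>i=1..k. \<xi> i) + \<xi> k0 = (\<Sum>i\<in>insert k0 {1..k}. \<xi> i)"
    using assms by simp
  also have "\<dots> \<le> (\<Sum>i=1..k'. \<xi> i)"
    by (rule sum_mono2) (use assms in auto)
  finally show ?thesis .
qed

lemma case1:
  fixes \<xi> :: "nat \<Rightarrow> real"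
  assumes p: "0 < p" "p < 1" and g: "0 < \<gamma>" and w: "1 \<le> w" and N: "1 \<le> N"
    and nn: "\<forall>i\<in>{1..N}. 0 \<le> \<xi> i" and SB: "(\<Sum>i=1..N. \<xi> i) \<le> B"
    and opt: "\<forall>\<eta>. admissible_N B N \<eta> \<longrightarrow> T_N p \<gamma> B w N \<eta> \<le> T_N p \<gamma> B w N \<xi>"
    and j: "1 \<le> j" "j < N" and ju: "(B - (\<Sum>i=1..j. \<xi> i)) / real w \<le> \<xi> j"
    and k0: "j < k0" "k0 \<le> N" "0 < \<xi> k0"
  shows False
proof -
  define S where "S k = (\<Sum>i=1..k. \<xi> i)" for k
  define u where "u k = (B - S k) / real w" for k
  define q where "q = 1 - p"
  have wp: "real w > 0" using w by auto
  have pos1: "0 < 1 + \<gamma> * \<xi> i" if "i \<in> {1..N}" for i using nn that g by (simp add: add_pos_nonneg)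
  have uge: "0 \<le> u k" if "k \<le> N" for k
    using sum_le_mono[OF nn _ order.refl, of k] that SB wp unfolding u_def S_def by simp
  have pos2: "0 < 1 + \<gamma> * ((B - (\<Sum>i=1..k. \<xi> i)) / real w)" if "k \<in> {1..N}" for k
  proof -
    have "0 \<le> \<gamma> * u k" using uge[of k] that g by simp
    thus ?thesis unfolding u_def S_def by linarith
  qed
  have umono: "u k \<le> u j" if "j \<le> k" "k \<le> N" for k
    using sum_le_mono[OF nn that] wp unfolding u_def S_def by (simp add: divide_right_mono)
  have uN: "u N < u j"
    using sum_lt_mono[OF nn k0(1,2) order.refl] k0(3) wp unfolding u_def S_def by (simp add: divide_strict_right_mono)
  have xj: "0 < \<xi> j" using uge[of N] uN ju unfolding u_def S_def by linarith
  define d :: "nat \<Rightarrow> real" where "d i = (if i = j then -1 else 0)" for i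
  have adm: "admissible_N B N (\<lambda>i. \<xi> i + e * d i)" if "0 < e" "e \<le> \<xi> j" for e
  proof -
    have "(\<Sum>i=1..N. \<xi> i + e * d i) = S N - e"
      using j by (simp add: sum.distrib sum_distrib_left[symmetric] d_def S_def)
    thus ?thesis using nn that SB unfolding admissible_N_def S_def by (auto simp: d_def)
  qed
  define L where "L = ln (2::real)"
  have L: "L > 0" by (simp add: L_def)
  define X where "X = 1 + \<gamma> * \<xi> j"
  have X: "X > 0" using pos1[of j] j by (simp add: X_def)
  define K where "K = \<gamma> / (2 * L * X)"
  have K: "K > 0" using g L X by (simp add: K_def)
  define A where "A = q^(j+w-1)"
  define C where "C = q^(N+w-1)"
  have Dd: "(\<Sum>i=1..k. d i) = (if j \<le> k then -1 else 0)" for k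
    unfolding d_def using j by (simp add: sum.delta)
  define s1 where "s1 = (\<Sum>i=1..N. p*(1-p)^(i+w-1)/2 * \<gamma> * d i / (ln 2 * (1 + \<gamma> * \<xi> i)))"
  define T2 where "T2 = (\<Sum>k=1..N-1. p^2*(1-p)^(k+w-1)/2 * \<gamma> * (\<Sum>i=1..k. d i) / (ln 2 * (1 + \<gamma> * ((B - (\<Sum>i=1..k. \<xi> i)) / real w))))"
  define T3 where "T3 = p*(1-p)^(N+w-1)/2 * \<gamma> * (\<Sum>i=1..N. d i) / (ln 2 * (1 + \<gamma> * ((B - (\<Sum>i=1..N. \<xi> i)) / real w)))"
  have Dv: "Dv p \<gamma> B w N \<xi> d = s1 - T2 - T3" unfolding Dv_def s1_def T2_def T3_def ..
  have s1: "s1 = -(p*K*A)"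
  proof -
    have "s1 = (\<Sum>i=1..N. if i = j then -(p*K*A) else 0)"
      unfolding s1_def by (intro sum.cong refl) (simp add: d_def K_def A_def q_def L_def X_def field_simps)
    also have "\<dots> = -(p*K*A)" using j by (simp add: sum.delta)
    finally show ?thesis .
  qed
  have T2: "T2 \<le> -(p*K*A) + p*K*C"
  proof -
    have "T2 \<le> (\<Sum>k=1..N-1. if j \<le> k then -(p*K*(p*q^(k+w-1))) else 0)"
      unfolding T2_def
    proof (rule sum_mono)
      fix k assume k: "k \<in> {1..N-1}"
      show "p^2*(1-p)^(k+w-1)/2 * \<gamma> * (\<Sum>i=1..k. d i) / (ln 2 * (1 + \<gamma> * ((B - (\<Sum>i=1..k. \<xi> i)) / real w)))
            \<le> (if j \<le> k then -(p*K*(p*q^(k+w-1))) else 0)"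
      proof (cases "j \<le> k")
        case True
        have Z: "0 < 1 + \<gamma> * u k" using pos2[of k] k unfolding u_def S_def by auto
        have ZX: "1 + \<gamma> * u k \<le> X" using umono[of k] True k ju g unfolding X_def u_def S_def
          by (smt (verit, best) atLeastAtMost_iff diff_le_self le_trans mult_left_mono)
        have c: "0 < p^2*(1-p)^(k+w-1)/2 * \<gamma>" using p g by simp
        have "(p^2*(1-p)^(k+w-1)/2 * \<gamma>) / (L * X) \<le> (p^2*(1-p)^(k+w-1)/2 * \<gamma>) / (L * (1 + \<gamma> * u k))"
          by (rule divide_left_mono) (use c Z ZX L in auto)
        moreover have "(p^2*(1-p)^(k+w-1)/2 * \<gamma>) / (L * X) = p*K*(p*q^(k+w-1))"
          unfolding K_def q_def using L X by (simp add: field_simps power2_eq_square)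
        moreover have dk: "(\<Sum>i=1..k. d i) = -1" using Dd[of k] True by simp
        ultimately show ?thesis using True unfolding dk by (simp add: u_def S_def L_def)
      next
        case False
        have dk: "(\<Sum>i=1..k. d i) = 0" using Dd[of k] False by simp
        show ?thesis using False unfolding dk by simp
      qed
    qed
    also have "\<dots> = (\<Sum>k\<in>{1..N-1} \<inter> {k. j \<le> k}. -(p*K*(p*q^(k+w-1))))"
      by (subst sum.inter_restrict) auto
    also have "{1..N-1} \<inter> {k. j \<le> k} = {j..<N}" using j by auto
    also have "(\<Sum>k\<in>{j..<N}. -(p*K*(p*q^(k+w-1)))) = -(p*K) * (\<Sum>k\<in>{j..<N}. (1-q)*q^(k+(w-1)))"
      unfolding sum_distrib_left using w by (intro sum.cong refl) (simp add: q_def)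
    also have "\<dots> = -(p*K) * (A - C)" unfolding geom_id[OF less_imp_le[OF j(2)]] A_def C_def
      using w by (simp add: add.commute add_diff_assoc)
    finally show ?thesis by (simp add: algebra_simps)
  qed
  have T3: "T3 < -(p*K*C)"
  proof -
    have ZN: "0 < 1 + \<gamma> * u N" using pos2[of N] N unfolding u_def S_def by auto
    have ZX: "1 + \<gamma> * u N < X" using uN ju g unfolding X_def u_def S_def
      by (smt (verit) mult_strict_left_mono)
    have c: "0 < p*(1-p)^(N+w-1)/2 * \<gamma>" using p g by simp
    have "(p*(1-p)^(N+w-1)/2 * \<gamma>) / (L * X) < (p*(1-p)^(N+w-1)/2 * \<gamma>) / (L * (1 + \<gamma> * u N))"
      by (rule divide_strict_left_mono) (use c ZN ZX L in auto)
    moreover have "(p*(1-p)^(N+w-1)/2 * \<gamma>) / (L * X) = p*K*C"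
      unfolding K_def q_def C_def using L X by (simp add: field_simps)
    moreover have dk: "(\<Sum>i=1..N. d i) = -1" using Dd[of N] j by simp
    ultimately show ?thesis unfolding T3_def dk by (simp add: u_def S_def L_def)
  qed
  have "0 < Dv p \<gamma> B w N \<xi> d" using Dv s1 T2 T3 by linarith
  show False
    by (rule perturb[OF p w N pos1 pos2 opt xj adm]) (use \<open>0 < Dv p \<gamma> B w N \<xi> d\<close> in auto)
qed

lemma case2:
  fixes \<xi> :: "nat \<Rightarrow> real"
  assumes p: "0 < p" "p < 1" and g: "0 < \<gamma>" and w: "1 \<le> w" and N: "1 \<le> N"
    and nn: "\<forall>i\<in>{1..N}. 0 \<le> \<xi> i" and SB: "(\<Sum>i=1..N. \<xi> i) \<le> B"
    and opt: "\<forall>\<eta>. admissible_N B N \<eta> \<longrightarrow> T_N p \<gamma> B w N \<eta> \<le> T_N p \<gamma> B w N \<xi>"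
    and m: "1 \<le> m" "m < N" and mu: "(B - (\<Sum>i=1..m. \<xi> i)) / real w \<le> \<xi> m"
    and xm: "0 < \<xi> m" and xm1: "\<xi> (Suc m) = 0"
  shows False
proof -
  define S where "S k = (\<Sum>i=1..k. \<xi> i)" for k
  define u where "u k = (B - S k) / real w" for k
  define q where "q = 1 - p"
  have wp: "real w > 0" using w by auto
  have pos1: "0 < 1 + \<gamma> * \<xi> i" if "i \<in> {1..N}" for i using nn that g by (simp add: add_pos_nonneg)
  have uge: "0 \<le> u k" if "k \<le> N" for k
    using sum_le_mono[OF nn _ order.refl, of k] that SB wp unfolding u_def S_def by simp
  have pos2: "0 < 1 + \<gamma> * ((B - (\<Sum>i=1..k. \<xi> i)) / real w)" if "k \<in> {1..N}" for k
  proof -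
    have "0 \<le> \<gamma> * u k" using uge[of k] that g by simp
    thus ?thesis unfolding u_def S_def by linarith
  qed
  define d :: "nat \<Rightarrow> real" where "d i = (if i = m then -1 else 0) + (if i = Suc m then 1 else 0)" for i
  have Dd: "(\<Sum>i=1..k. d i) = (if m \<le> k then -1 else 0) + (if Suc m \<le> k then 1 else 0)" for k
    unfolding d_def sum.distrib using m by (simp add: sum.delta)
  have adm: "admissible_N B N (\<lambda>i. \<xi> i + e * d i)" if "0 < e" "e \<le> \<xi> m" for e
  proof -
    have "(\<Sum>i=1..N. \<xi> i + e * d i) = S N + e * (\<Sum>i=1..N. d i)"
      by (simp add: sum.distrib sum_distrib_left S_def)
    also have "(\<Sum>i=1..N. d i) = 0" unfolding Dd using m by simp
    finally have "(\<Sum>i=1..N. \<xi> i + e * d i) = S N" by simp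
    thus ?thesis using nn that SB unfolding admissible_N_def S_def by (auto simp: d_def)
  qed
  define L where "L = ln (2::real)"
  have L: "L > 0" by (simp add: L_def)
  define Y where "Y = 1 + \<gamma> * \<xi> m"
  have Y: "Y > 1" using xm g by (simp add: Y_def)
  define Z where "Z = 1 + \<gamma> * u m"
  have Z: "Z > 0" using pos2[of m] m unfolding Z_def u_def S_def by auto
  have "\<gamma> * u m \<le> \<gamma> * \<xi> m" using mult_left_mono[OF mu, of \<gamma>] g unfolding u_def S_def by simp
  hence ZY: "Z \<le> Y" unfolding Z_def Y_def by simp
  define r where "r = q^(m+w-1)"
  have r: "r > 0" using p by (simp add: r_def q_def)
  have rq: "(1-p)^(Suc m + w - 1) = r * q" using w by (simp add: r_def q_def power_Suc2[symmetric])
  have rq2: "(1-p)^(m + w - Suc 0) * (1-p) = (1-p)^(m+w)"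
  proof -
    have "m + w = Suc (m + w - Suc 0)" using w by simp
    hence "(1-p)^(m+w) = (1-p)^(Suc (m + w - Suc 0))" by (rule arg_cong)
    thus ?thesis by (simp add: power_Suc2)
  qed
  define s1 where "s1 = (\<Sum>i=1..N. p*(1-p)^(i+w-1)/2 * \<gamma> * d i / (ln 2 * (1 + \<gamma> * \<xi> i)))"
  define T2 where "T2 = (\<Sum>k=1..N-1. p^2*(1-p)^(k+w-1)/2 * \<gamma> * (\<Sum>i=1..k. d i) / (ln 2 * (1 + \<gamma> * ((B - (\<Sum>i=1..k. \<xi> i)) / real w))))"
  define T3 where "T3 = p*(1-p)^(N+w-1)/2 * \<gamma> * (\<Sum>i=1..N. d i) / (ln 2 * (1 + \<gamma> * ((B - (\<Sum>i=1..N. \<xi> i)) / real w)))"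
  have Dv: "Dv p \<gamma> B w N \<xi> d = s1 - T2 - T3" unfolding Dv_def s1_def T2_def T3_def ..
  have s1: "s1 = -(p*r/2*\<gamma>/(L*Y)) + p*(r*q)/2*\<gamma>/L"
  proof -
    have "s1 = (\<Sum>i=1..N. (if i = m then -(p*r/2*\<gamma>/(L*Y)) else 0) + (if i = Suc m then p*(r*q)/2*\<gamma>/L else 0))"
      unfolding s1_def
    proof (intro sum.cong refl)
      fix i assume "i \<in> {1..N}"
      show "p*(1-p)^(i+w-1)/2 * \<gamma> * d i / (ln 2 * (1 + \<gamma> * \<xi> i)) =
        (if i = m then -(p*r/2*\<gamma>/(L*Y)) else 0) + (if i = Suc m then p*(r*q)/2*\<gamma>/L else 0)"
        by (cases "i = m"; cases "i = Suc m") (auto simp: d_def r_def q_def L_def Y_def xm1 rq2)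
    qed
    also have "\<dots> = -(p*r/2*\<gamma>/(L*Y)) + p*(r*q)/2*\<gamma>/L"
      unfolding sum.distrib using m by (simp add: sum.delta)
    finally show ?thesis .
  qed
  have T2: "T2 = -(p^2*r/2*\<gamma>/(L*Z))"
  proof -
    have "T2 = (\<Sum>k=1..N-1. if k = m then -(p^2*r/2*\<gamma>/(L*Z)) else 0)"
      unfolding T2_def
    proof (intro sum.cong refl)
      fix k assume "k \<in> {1..N-1}"
      show "p^2*(1-p)^(k+w-1)/2 * \<gamma> * (\<Sum>i=1..k. d i) / (ln 2 * (1 + \<gamma> * ((B - (\<Sum>i=1..k. \<xi> i)) / real w)))
        = (if k = m then -(p^2*r/2*\<gamma>/(L*Z)) else 0)"
      proof (cases "k = m")
        case True
        have dk: "(\<Sum>i=1..k. d i) = -1" unfolding Dd using True by simp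
        show ?thesis unfolding dk using True by (simp add: r_def q_def L_def Z_def u_def S_def)
      next
        case False
        have dk: "(\<Sum>i=1..k. d i) = 0" unfolding Dd using False by simp
        show ?thesis unfolding dk using False by simp
      qed
    qed
    also have "\<dots> = -(p^2*r/2*\<gamma>/(L*Z))" using m by (simp add: sum.delta)
    finally show ?thesis .
  qed
  have T3: "T3 = 0"
  proof -
    have dk: "(\<Sum>i=1..N. d i) = 0" unfolding Dd using m by simp
    show ?thesis unfolding T3_def dk by simp
  qed
  have br: "0 < -1/Y + q + p/Z"
  proof -
    have "p/Y \<le> p/Z" by (rule divide_left_mono) (use p Z ZY in auto)
    moreover have "-1/Y + q + p/Y = q * (1 - 1/Y)" using Y by (simp add: q_def field_simps)
    moreover have "0 < q * (1 - 1/Y)" using p Y by (simp add: q_def)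
    ultimately show ?thesis by linarith
  qed
  have eq: "s1 - T2 - T3 = (p*r*\<gamma>/(2*L)) * (-1/Y + q + p/Z)"
    unfolding s1 T2 T3 using L Y Z by (simp add: field_simps power2_eq_square)
  have "0 < Dv p \<gamma> B w N \<xi> d" unfolding Dv eq using p r g L br by simp
  show False
    by (rule perturb[OF p w N pos1 pos2 opt xm adm]) (use \<open>0 < Dv p \<gamma> B w N \<xi> d\<close> in auto)
qed

theorem lemma4:
  fixes p \<gamma> B :: real and w N :: nat and \<xi> :: "nat \<Rightarrow> real"
  assumes "0 < p" "p < 1" "0 < \<gamma>" "0 < B" "1 \<le> w" "1 \<le> N"
    and "admissible_N B N \<xi>"
    and "\<forall>\<eta>. admissible_N B N \<eta> \<longrightarrow> T_N p \<gamma> B w N \<eta> \<le> T_N p \<gamma> B w N \<xi>"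
  shows "\<forall>j\<in>{1..<N}. \<xi> j < (B - (\<Sum>i=1..j. \<xi> i)) / real w"
proof (rule ballI, rule ccontr)
  note p = assms(1,2) and g = assms(3) and B = assms(4) and w = assms(5) and N = assms(6)
    and opt = assms(8)
  have nn: "\<forall>i\<in>{1..N}. 0 \<le> \<xi> i" and SB: "(\<Sum>i=1..N. \<xi> i) \<le> B"
    using assms(7) unfolding admissible_N_def by auto
  fix j assume j: "j \<in> {1..<N}" and nj: "\<not> \<xi> j < (B - (\<Sum>i=1..j. \<xi> i)) / real w"
  have ju: "(B - (\<Sum>i=1..j. \<xi> i)) / real w \<le> \<xi> j" using nj by simp
  have j1: "1 \<le> j" "j < N" using j by auto
  show False
  proof (cases "\<exists>k0. j < k0 \<and> k0 \<le> N \<and> 0 < \<xi> k0")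
    case True
    then obtain k0 where "j < k0" "k0 \<le> N" "0 < \<xi> k0" by blast
    from case1[OF p g w N nn SB opt j1 ju this] show False .
  next
    case False
    have z: "\<xi> k = 0" if "j < k" "k \<le> N" for k
      using False nn that by (metis atLeastAtMost_iff less_eq_real_def linorder_not_le order_le_less_trans le_add1 j1(1) less_imp_le_nat order.trans)
    define M where "M = {i\<in>{1..j}. 0 < \<xi> i}"
    have fM: "finite M" unfolding M_def by simp
    have Mne: "M \<noteq> {}"
    proof
      assume "M = {}"
      hence "\<forall>i\<in>{1..j}. \<xi> i = 0" using nn j1 unfolding M_def
        by (metis (mono_tags, lifting) atLeastAtMost_iff empty_iff less_eq_real_def mem_Collect_eq less_imp_le_nat order.trans)
      hence "(\<Sum>i=1..j. \<xi> i) = 0" "\<xi> j = 0" using j1 by auto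
      moreover have "B / real w > 0" using B w by simp
      ultimately show False using ju by simp
    qed
    define m where "m = Max M"
    have mM: "m \<in> M" unfolding m_def using fM Mne by (rule Max_in)
    have m: "1 \<le> m" "m \<le> j" "0 < \<xi> m" using mM unfolding M_def by auto
    have zz: "\<xi> i = 0" if "m < i" "i \<le> N" for i
    proof (cases "i \<le> j")
      case True
      hence "i \<notin> M" using that fM Max_ge m_def by fastforce
      moreover have "i \<in> {1..j}" "i \<in> {1..N}" using True that m by auto
      ultimately have "\<not> 0 < \<xi> i" "0 \<le> \<xi> i" using nn unfolding M_def by auto
      thus ?thesis by simp
    next
      case False
      thus ?thesis using z that by simp
    qed
    have xm1: "\<xi> (Suc m) = 0" using zz m j1 by simp
    have Seq: "(\<Sum>i=1..m. \<xi> i) = (\<Sum>i=1..j. \<xi> i)"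
      by (rule sum.mono_neutral_left) (use m j1 zz in auto)
    have "\<xi> j \<le> \<xi> m"
    proof (cases "m = j")
      case False
      hence "\<xi> j = 0" using zz m j1 by simp
      thus ?thesis using m by simp
    qed simp
    hence mu: "(B - (\<Sum>i=1..m. \<xi> i)) / real w \<le> \<xi> m" using ju Seq by simp
    have mN: "m < N" using m j1 by simp
    from case2[OF p g w N nn SB opt m(1) mN mu m(3) xm1] show False .
  qed
qed

end
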